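(* Let $A$ be a unital, properly infinite $C^*$-algebra and let $\varphi,\psi\colon\mathcal O_\infty\to A$ be unital embeddings. Then $\psi$ is homotopic to a unital embedding $\psi'\colon\mathcal O_\infty\to A$ for which there is a unitary $u\in A$ with $[u]=0$ in $K_1(A)$ and $\psi'(s_j)=u\varphi(s_j)$ for all $j\ge1$.
   Context: $\mathcal O_\infty$ is the universal unital $C^*$-algebra generated by isometries $s_1,s_2,\dots$ with pairwise orthogonal range projections $s_js_j^*$. Two $*$-homomorphisms $\alpha,\beta\colon\mathcal O_\infty\to A$ are homotopic if there is a family $(\alpha_t)_{t\in[0,1]}$ of $*$-homomorphisms with $\alpha_0=\alpha$, $\alpha_1=\beta$ and $t\mapsto\alpha_t(x)$ norm-continuous for every $x$. A unital $C^*$-algebra is properly infinite if there are mutually orthogonal projections $e,f$ with $e\sim1\sim f$. *)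

theory Defs
  imports Complex_Main
begin

text \<open>The real structure comes from real_normed_algebra_1,
  the complex scalar multiplication is the extra operation scaleC.\<close>

class cstar_algebra = banach + real_normed_algebra_1 +
  fixes adj :: "'a \<Rightarrow> 'a"
    and scaleC :: "complex \<Rightarrow> 'a \<Rightarrow> 'a"
  assumes scaleC_of_real: "scaleC (complex_of_real r) x = scaleR r x"
    and scaleC_add_right: "scaleC c (x + y) = scaleC c x + scaleC c y"
    and scaleC_add_left: "scaleC (c + d) x = scaleC c x + scaleC d x"
    and scaleC_scaleC: "scaleC c (scaleC d x) = scaleC (c * d) x"
    and scaleC_one: "scaleC 1 x = x"
    and scaleC_mult_left: "scaleC c x * y = scaleC c (x * y)"
    and scaleC_mult_right: "x * scaleC c y = scaleC c (x * y)"
    and norm_scaleC: "norm (scaleC c x) = cmod c * norm x"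
    and adj_adj: "adj (adj x) = x"
    and adj_add: "adj (x + y) = adj x + adj y"
    and adj_scaleC: "adj (scaleC c x) = scaleC (cnj c) (adj x)"
    and adj_mult: "adj (x * y) = adj y * adj x"
    and cstar_identity: "norm (adj x * x) = (norm x)\<^sup>2"

definition isometry :: "'a::cstar_algebra \<Rightarrow> bool" where
  "isometry v \<longleftrightarrow> adj v * v = 1"

definition unitary :: "'a::cstar_algebra \<Rightarrow> bool" where
  "unitary u \<longleftrightarrow> adj u * u = 1 \<and> u * adj u = 1"

definition projection :: "'a::cstar_algebra \<Rightarrow> bool" where
  "projection p \<longleftrightarrow> p * p = p \<and> adj p = p"

definition mvn_equiv :: "'a::cstar_algebra \<Rightarrow> 'a \<Rightarrow> bool" where
  "mvn_equiv p q \<longleftrightarrow> (\<exists>v. adj v * v = p \<and> v * adj v = q)"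

definition properly_infinite :: "'a::cstar_algebra itself \<Rightarrow> bool" where
  "properly_infinite _ \<longleftrightarrow>
     (\<exists>e f :: 'a. projection e \<and> projection f \<and> e * f = 0 \<and>
        mvn_equiv e 1 \<and> mvn_equiv 1 f)"

text \<open>By the universal property, a unital *-homomorphism O_infinity \<rightarrow> A is the
  same thing as a sequence of isometries in A with pairwise orthogonal range
  projections (the images of the generators s_j; generators indexed by nat).
  Since O_infinity is simple and A is non-zero (norm 1 = 1), all of them are
  embeddings.\<close>
definition Oinf_hom :: "(nat \<Rightarrow> 'a::cstar_algebra) \<Rightarrow> bool" where
  "Oinf_hom S \<longleftrightarrow> (\<forall>j. isometry (S j)) \<and>
     (\<forall>i j. i \<noteq> j \<longrightarrow> (S i * adj (S i)) * (S j * adj (S j)) = 0)"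

text \<open>Image of a *-monomial in the generators (a word in s_j and s_j^*) under the
  homomorphism determined by S.  (j, True) stands for s_j^*, (j, False) for s_j.\<close>
definition Oinf_word :: "(nat \<Rightarrow> 'a::cstar_algebra) \<Rightarrow> (nat \<times> bool) list \<Rightarrow> 'a" where
  "Oinf_word S w = foldr (\<lambda>(j, b) x. (if b then adj (S j) else S j) * x) w 1"

text \<open>Homotopy of unital *-homomorphisms O_infinity \<rightarrow> A: a path of such
  homomorphisms, pointwise norm continuous on the dense *-subalgebra spanned by
  the *-monomials (hence everywhere, *-homomorphisms being contractive).\<close>
definition Oinf_homotopic :: "(nat \<Rightarrow> 'a::cstar_algebra) \<Rightarrow> (nat \<Rightarrow> 'a) \<Rightarrow> bool" where
  "Oinf_homotopic S T \<longleftrightarrow>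
     (\<exists>H :: real \<Rightarrow> nat \<Rightarrow> 'a.
        (\<forall>t\<in>{0..1}. Oinf_hom (H t)) \<and> H 0 = S \<and> H 1 = T \<and>
        (\<forall>w. continuous_on {0..1} (\<lambda>t. Oinf_word (H t) w)))"

text \<open>n x n matrices over A as functions nat \<Rightarrow> nat \<Rightarrow> 'a (entries with indices < n).\<close>
definition mat_mult :: "nat \<Rightarrow> (nat \<Rightarrow> nat \<Rightarrow> 'a::cstar_algebra) \<Rightarrow> (nat \<Rightarrow> nat \<Rightarrow> 'a) \<Rightarrow> nat \<Rightarrow> nat \<Rightarrow> 'a" where
  "mat_mult n X Y = (\<lambda>i k. \<Sum>l<n. X i l * Y l k)"

definition mat_adj :: "(nat \<Rightarrow> nat \<Rightarrow> 'a::cstar_algebra) \<Rightarrow> nat \<Rightarrow> nat \<Rightarrow> 'a" where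
  "mat_adj X = (\<lambda>i k. adj (X k i))"

definition mat_id :: "nat \<Rightarrow> nat \<Rightarrow> 'a::cstar_algebra" where
  "mat_id = (\<lambda>i k. if i = k then 1 else 0)"

definition mat_eq :: "nat \<Rightarrow> (nat \<Rightarrow> nat \<Rightarrow> 'a) \<Rightarrow> (nat \<Rightarrow> nat \<Rightarrow> 'a) \<Rightarrow> bool" where
  "mat_eq n X Y \<longleftrightarrow> (\<forall>i<n. \<forall>k<n. X i k = Y i k)"

definition mat_unitary :: "nat \<Rightarrow> (nat \<Rightarrow> nat \<Rightarrow> 'a::cstar_algebra) \<Rightarrow> bool" where
  "mat_unitary n U \<longleftrightarrow> mat_eq n (mat_mult n (mat_adj U) U) mat_id \<and>
                        mat_eq n (mat_mult n U (mat_adj U)) mat_id"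

definition diag_u_one :: "'a::cstar_algebra \<Rightarrow> nat \<Rightarrow> nat \<Rightarrow> 'a" where
  "diag_u_one u = (\<lambda>i k. if i = k then (if i = 0 then u else 1) else 0)"

text \<open>K_1(A) = U_\<infinity>(A)/~_1; a unitary u has [u] = 0 iff for some n \<ge> 1,
  u \<oplus> 1_(n-1) is homotopic to 1_n within the unitary group U_n(A).  The topology
  on M_n(A) (from its C*-norm) is the entrywise topology.\<close>
definition K1_zero :: "'a::cstar_algebra \<Rightarrow> bool" where
  "K1_zero u \<longleftrightarrow>
     (\<exists>n\<ge>1. \<exists>V :: real \<Rightarrow> nat \<Rightarrow> nat \<Rightarrow> 'a.
        (\<forall>t\<in>{0..1}. mat_unitary n (V t)) \<and>
        mat_eq n (V 0) (diag_u_one u) \<and> mat_eq n (V 1) mat_id \<and>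
        (\<forall>i<n. \<forall>k<n. continuous_on {0..1} (\<lambda>t. V t i k)))"

end

theory Submission
  imports Defs
begin


lemma adj_one[simp]: "adj (1::'a::cstar_algebra) = 1"
proof -
  have "adj (adj (1::'a) * 1) = adj 1 * adj (adj 1)" by (rule adj_mult)
  then show ?thesis by (simp add: adj_adj)
qed

lemma adj_zero[simp]: "adj (0::'a::cstar_algebra) = 0"
  using adj_add[of "0::'a" 0] by simp

lemma adj_uminus[simp]: "adj (- x) = - adj (x::'a::cstar_algebra)"
  using adj_add[of x "-x"] by (simp add: eq_neg_iff_add_eq_0 add.commute)

lemma adj_diff: "adj (x - y) = adj x - adj (y::'a::cstar_algebra)"
  using adj_add[of x "-y"] by simp

lemma adj_scaleR: "adj (scaleR r x) = scaleR r (adj (x::'a::cstar_algebra))"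
  by (metis adj_scaleC scaleC_of_real complex_cnj_complex_of_real)

lemma norm_adj: "norm (adj x) = norm (x::'a::cstar_algebra)"
proof -
  have le: "norm y \<le> norm (adj y)" for y :: 'a
  proof (cases "y = 0")
    case False
    have "(norm y)^2 = norm (adj y * y)" by (simp add: cstar_identity)
    also have "... \<le> norm (adj y) * norm y" by (rule norm_mult_ineq)
    finally have "norm y * norm y \<le> norm (adj y) * norm y" by (simp add: power2_eq_square)
    then show ?thesis using False by simp
  qed simp
  show ?thesis using le[of x] le[of "adj x"] by (simp add: adj_adj)
qed

lemma bounded_linear_adj: "bounded_linear (adj :: 'a::cstar_algebra \<Rightarrow> 'a)"
  by (rule bounded_linear_intro[where K=1]) (auto simp: adj_add adj_scaleR norm_adj)

lemma continuous_on_adj[continuous_intros]: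
  "continuous_on S f \<Longrightarrow> continuous_on S (\<lambda>t. adj (f t :: 'a::cstar_algebra))"
  using bounded_linear.continuous_on[OF bounded_linear_adj] by blast

lemma adj_zero_iff: "adj x * x = 0 \<Longrightarrow> x = (0::'a::cstar_algebra)"
  using cstar_identity[of x] by simp

lemma adj_sum: "adj (sum f A) = sum (\<lambda>i. adj (f i)) (A::'b set)" for f :: "'b \<Rightarrow> 'a::cstar_algebra"
  by (induction A rule: infinite_finite_induct) (auto simp: adj_add)

definition pisom :: "'a::cstar_algebra \<Rightarrow> 'a \<Rightarrow> 'a \<Rightarrow> bool" where
  "pisom a p q \<longleftrightarrow> adj a * a = p \<and> a * adj a = q"

lemma pisom_right:
  assumes "pisom a p q" "p * p = p" shows "a * p = a"
proof -
  have pa: "adj p = p" using assms(1) by (auto simp: pisom_def adj_mult adj_adj)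
  let ?x = "a - a * p"
  have "adj ?x * ?x = adj a * a - adj a * a * p - p * (adj a * a) + p * (adj a * a) * p"
    by (simp add: adj_diff adj_mult pa algebra_simps)
  also have "... = 0" using assms by (simp add: pisom_def mult.assoc)
  finally show ?thesis using adj_zero_iff by fastforce
qed

lemma pisom_left:
  assumes "pisom a p q" "p * p = p" shows "q * a = a"
proof -
  have "q * a = a * (adj a * a)" using assms(1) unfolding pisom_def by (metis mult.assoc)
  also have "... = a" using pisom_right[OF assms] assms(1) by (simp add: pisom_def)
  finally show ?thesis .
qed

lemma pisom_adj: "pisom a p q \<Longrightarrow> pisom (adj a) q p"
  by (simp add: pisom_def adj_adj)

lemma pisom_proj: "pisom a p q \<Longrightarrow> adj p = p \<and> adj q = q"
  by (auto simp: pisom_def adj_mult adj_adj)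

lemma pisom_comp:
  assumes "pisom a p q" "pisom b q r" "p * p = p" "r * r = r"
  shows "pisom (b * a) p r"
proof -
  have "adj (b * a) * (b * a) = adj a * (adj b * b) * a" by (simp add: adj_mult mult.assoc)
  also have "... = (adj a * a) * (adj a * a)" using assms(1,2) unfolding pisom_def by (metis mult.assoc)
  finally have 1: "adj (b * a) * (b * a) = p" using assms by (simp add: pisom_def)
  have "(b * a) * adj (b * a) = b * (a * adj a) * adj b" by (simp add: adj_mult mult.assoc)
  also have "... = (b * adj b) * (b * adj b)" using assms(1,2) unfolding pisom_def by (metis mult.assoc)
  finally have 2: "(b * a) * adj (b * a) = r" using assms by (simp add: pisom_def)
  show ?thesis using 1 2 by (simp add: pisom_def)
qed

lemma pisom_add:
  assumes a: "pisom a p1 q1" and b: "pisom b p2 q2"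
    and "p1 * p1 = p1" "p2 * p2 = p2" "q1 * q2 = 0" "p1 * p2 = 0"
  shows "pisom (a + b) (p1 + p2) (q1 + q2)"
proof -
  have qa: "q1 * a = a" by (rule pisom_left[OF a]) fact
  have qb: "q2 * b = b" by (rule pisom_left[OF b]) fact
  have ap: "a * p1 = a" by (rule pisom_right[OF a]) fact
  have bp: "b * p2 = b" by (rule pisom_right[OF b]) fact
  have pr: "adj q1 = q1" "adj p2 = p2" using pisom_proj[OF a] pisom_proj[OF b] by auto
  have "adj a * b = adj (q1 * a) * (q2 * b)" using qa qb by simp
  also have "... = adj a * (q1 * q2) * b" by (simp add: adj_mult pr mult.assoc)
  finally have ab: "adj a * b = 0" using assms by simp
  have ba: "adj b * a = 0" using arg_cong[OF ab, of adj] by (simp add: adj_mult adj_adj)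
  have "a * adj b = (a * p1) * adj (b * p2)" using ap bp by simp
  also have "... = a * (p1 * p2) * adj b" by (simp add: adj_mult pr mult.assoc)
  finally have ab2: "a * adj b = 0" using assms by simp
  have ba2: "b * adj a = 0" using arg_cong[OF ab2, of adj] by (simp add: adj_mult adj_adj)
  show ?thesis using a b ab ba ab2 ba2
    by (simp add: pisom_def adj_add algebra_simps)
qed



lemma v_exists:
  fixes t0 t1 s0 s1 :: "'a::cstar_algebra"
  assumes it0: "adj t0 * t0 = 1" and it1: "adj t1 * t1 = 1" and ot: "adj t0 * t1 = 0"
    and is0: "adj s0 * s0 = 1" and is1: "adj s1 * s1 = 1" and os: "adj s0 * s1 = 0"
  shows "\<exists>v. pisom v (1 - t0 * adj t0) (1 - s0 * adj s0)"
proof -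
  have ot': "adj t1 * t0 = 0" using arg_cong[OF ot, of adj] by (simp add: adj_mult adj_adj)
  have os': "adj s1 * s0 = 0" using arg_cong[OF os, of adj] by (simp add: adj_mult adj_adj)
  have R: "adj t0 * (t0 * x) = x" "adj t1 * (t1 * x) = x" "adj t0 * (t1 * x) = 0" "adj t1 * (t0 * x) = 0"
    "adj s0 * (s0 * x) = x" "adj s1 * (s1 * x) = x" "adj s0 * (s1 * x) = 0" "adj s1 * (s0 * x) = 0"
    for x :: 'a
    using it0 it1 ot ot' is0 is1 os os' by (simp_all flip: mult.assoc)
  note simps = R it0 it1 ot ot' is0 is1 os os' adj_add adj_diff adj_mult adj_adj algebra_simps
  define e where "e = 1 - t0 * adj t0"
  define f where "f = 1 - s0 * adj s0"
  define gT where "gT = 1 - t0 * adj t0 - t1 * adj t1"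
  define gS where "gS = 1 - s0 * adj s0 - s1 * adj s1"
  define P1 where "P1 = t1 * s0 * adj s0 * adj t1 + gT"
  define P2 where "P2 = t1 * f * adj t1"
  define Q1 where "Q1 = s1 * t0 * adj t0 * adj s1 + gS"
  define Q2 where "Q2 = s1 * e * adj s1"
  have e2: "e * e = e" unfolding e_def by (simp add: simps)
  have f2: "f * f = f" unfolding f_def by (simp add: simps)
  have P12: "P1 * P1 = P1" unfolding P1_def gT_def by (simp add: simps)
  have P22: "P2 * P2 = P2" unfolding P2_def f_def by (simp add: simps)
  have al: "pisom (t1 * adj s0 * adj t1 + gT) P1 e"
    unfolding pisom_def P1_def e_def gT_def by (simp add: simps)
  have be: "pisom (s1 * e) e Q2"
    unfolding pisom_def Q2_def e_def by (simp add: simps)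
  have ga: "pisom (f * adj t1) P2 f"
    unfolding pisom_def P2_def f_def by (simp add: simps)
  have de: "pisom (s1 * t0 * adj s1 + gS) f Q1"
    unfolding pisom_def Q1_def f_def gS_def by (simp add: simps)
  have Q12: "Q1 * Q1 = Q1" unfolding Q1_def gS_def by (simp add: simps)
  have Q22: "Q2 * Q2 = Q2" unfolding Q2_def e_def by (simp add: simps)
  have v1: "pisom (s1 * e * (t1 * adj s0 * adj t1 + gT)) P1 Q2"
    by (rule pisom_comp[OF al be P12 Q22])
  have v2: "pisom ((s1 * t0 * adj s1 + gS) * (f * adj t1)) P2 Q1"
    by (rule pisom_comp[OF ga de P22 Q12])
  have o1: "Q2 * Q1 = 0" unfolding Q2_def Q1_def e_def gS_def by (simp add: simps)
  have o2: "P1 * P2 = 0" unfolding P1_def P2_def f_def gT_def by (simp add: simps)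
  have sP: "P1 + P2 = e" unfolding P1_def P2_def f_def gT_def e_def by (simp add: simps)
  have sQ: "Q2 + Q1 = f" unfolding Q1_def Q2_def f_def gS_def e_def by (simp add: simps)
  have "pisom (s1 * e * (t1 * adj s0 * adj t1 + gT) + (s1 * t0 * adj s1 + gS) * (f * adj t1)) (P1 + P2) (Q2 + Q1)"
    by (rule pisom_add[OF v1 v2 P12 P22 o1 o2])
  then show ?thesis unfolding sP sQ e_def f_def by blast
qed



definition mk :: "'a \<Rightarrow> 'a \<Rightarrow> 'a \<Rightarrow> 'a \<Rightarrow> nat \<Rightarrow> nat \<Rightarrow> 'a" where
  "mk a b c d = (\<lambda>i k. if i = 0 then (if k = 0 then a else b) else (if k = 0 then c else d))"

lemma mult_mk: "mat_mult 2 (mk a b c d) (mk a' b' c' d') =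
   mk (a*a'+b*c') (a*b'+b*d') (c*a'+d*c') (c*b'+d*d')"
  by (auto simp: mat_mult_def mk_def fun_eq_iff numeral_2_eq_2 lessThan_Suc)

lemma adj_mk: "mat_adj (mk a b c d) = mk (adj a) (adj c) (adj b) (adj d)"
  by (auto simp: mat_adj_def mk_def fun_eq_iff)

definition U2 :: "(nat \<Rightarrow> nat \<Rightarrow> 'a::cstar_algebra) \<Rightarrow> bool" where
  "U2 X \<longleftrightarrow> (\<exists>a b c d. X = mk a b c d \<and>
     adj a * a + adj c * c = 1 \<and> adj a * b + adj c * d = 0 \<and> adj b * a + adj d * c = 0 \<and> adj b * b + adj d * d = 1 \<and>
     a * adj a + b * adj b = 1 \<and> a * adj c + b * adj d = 0 \<and> c * adj a + d * adj b = 0 \<and> c * adj c + d * adj d = 1)"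

lemma U2_mat_unitary: "U2 X \<Longrightarrow> mat_unitary 2 X"
  by (clarsimp simp: U2_def mat_unitary_def adj_mk mult_mk)
     (auto simp: mat_eq_def mat_id_def mk_def less_Suc_eq numeral_2_eq_2)

lemma U2_mult:
  assumes "U2 X" "U2 Y" shows "U2 (mat_mult 2 X Y)"
proof -
  obtain a b c d where X: "X = mk a b c d" and x:
     "adj a * a + adj c * c = 1" "adj a * b + adj c * d = 0" "adj b * a + adj d * c = 0" "adj b * b + adj d * d = 1"
     "a * adj a + b * adj b = 1" "a * adj c + b * adj d = 0" "c * adj a + d * adj b = 0" "c * adj c + d * adj d = 1"
    using assms(1) unfolding U2_def by blast
  obtain a' b' c' d' where Y: "Y = mk a' b' c' d'" and y:
     "adj a' * a' + adj c' * c' = 1" "adj a' * b' + adj c' * d' = 0" "adj b' * a' + adj d' * c' = 0" "adj b' * b' + adj d' * d' = 1"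
     "a' * adj a' + b' * adj b' = 1" "a' * adj c' + b' * adj d' = 0" "c' * adj a' + d' * adj b' = 0" "c' * adj c' + d' * adj d' = 1"
    using assms(2) unfolding U2_def by blast
  have L: "adj a' * (adj a * a + adj c * c) * a' + adj c' * (adj b * a + adj d * c) * a' +
           adj a' * (adj a * b + adj c * d) * c' + adj c' * (adj b * b + adj d * d) * c' = 1"
    using x y by simp
  have 1: "adj (a*a'+b*c') * (a*a'+b*c') + adj (c*a'+d*c') * (c*a'+d*c') = 1"
    using L by (simp add: adj_add adj_mult algebra_simps)
  have L2: "adj a' * (adj a * a + adj c * c) * b' + adj c' * (adj b * a + adj d * c) * b' +
           adj a' * (adj a * b + adj c * d) * d' + adj c' * (adj b * b + adj d * d) * d' = 0"
    using x y by simp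
  have 2: "adj (a*a'+b*c') * (a*b'+b*d') + adj (c*a'+d*c') * (c*b'+d*d') = 0"
    using L2 by (simp add: adj_add adj_mult algebra_simps)
  have L3: "adj b' * (adj a * a + adj c * c) * a' + adj d' * (adj b * a + adj d * c) * a' +
           adj b' * (adj a * b + adj c * d) * c' + adj d' * (adj b * b + adj d * d) * c' = 0"
    using x y by simp
  have 3: "adj (a*b'+b*d') * (a*a'+b*c') + adj (c*b'+d*d') * (c*a'+d*c') = 0"
    using L3 by (simp add: adj_add adj_mult algebra_simps)
  have L4: "adj b' * (adj a * a + adj c * c) * b' + adj d' * (adj b * a + adj d * c) * b' +
           adj b' * (adj a * b + adj c * d) * d' + adj d' * (adj b * b + adj d * d) * d' = 1"
    using x y by simp
  have 4: "adj (a*b'+b*d') * (a*b'+b*d') + adj (c*b'+d*d') * (c*b'+d*d') = 1"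
    using L4 by (simp add: adj_add adj_mult algebra_simps)
  have M1: "a * (a' * adj a' + b' * adj b') * adj a + a * (a' * adj c' + b' * adj d') * adj b +
            b * (c' * adj a' + d' * adj b') * adj a + b * (c' * adj c' + d' * adj d') * adj b = 1"
    using x y by simp
  have 5: "(a*a'+b*c') * adj (a*a'+b*c') + (a*b'+b*d') * adj (a*b'+b*d') = 1"
    using M1 by (simp add: adj_add adj_mult algebra_simps)
  have M2: "a * (a' * adj a' + b' * adj b') * adj c + a * (a' * adj c' + b' * adj d') * adj d +
            b * (c' * adj a' + d' * adj b') * adj c + b * (c' * adj c' + d' * adj d') * adj d = 0"
    using x y by simp
  have 6: "(a*a'+b*c') * adj (c*a'+d*c') + (a*b'+b*d') * adj (c*b'+d*d') = 0"
    using M2 by (simp add: adj_add adj_mult algebra_simps)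
  have M3: "c * (a' * adj a' + b' * adj b') * adj a + c * (a' * adj c' + b' * adj d') * adj b +
            d * (c' * adj a' + d' * adj b') * adj a + d * (c' * adj c' + d' * adj d') * adj b = 0"
    using x y by simp
  have 7: "(c*a'+d*c') * adj (a*a'+b*c') + (c*b'+d*d') * adj (a*b'+b*d') = 0"
    using M3 by (simp add: adj_add adj_mult algebra_simps)
  have M4: "c * (a' * adj a' + b' * adj b') * adj c + c * (a' * adj c' + b' * adj d') * adj d +
            d * (c' * adj a' + d' * adj b') * adj c + d * (c' * adj c' + d' * adj d') * adj d = 1"
    using x y by simp
  have 8: "(c*a'+d*c') * adj (c*a'+d*c') + (c*b'+d*d') * adj (c*b'+d*d') = 1"
    using M4 by (simp add: adj_add adj_mult algebra_simps)
  show ?thesis unfolding X Y mult_mk U2_def using 1 2 3 4 5 6 7 8 by blast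
qed

lemma U2_adj: assumes "U2 X" shows "U2 (mat_adj X)"
proof -
  obtain a b c d where X: "X = mk a b c d" and x:
     "adj a * a + adj c * c = 1" "adj a * b + adj c * d = 0" "adj b * a + adj d * c = 0" "adj b * b + adj d * d = 1"
     "a * adj a + b * adj b = 1" "a * adj c + b * adj d = 0" "c * adj a + d * adj b = 0" "c * adj c + d * adj d = 1"
    using assms(1) unfolding U2_def by blast
  show ?thesis unfolding X adj_mk U2_def
    by (rule exI)+ (rule conjI[OF refl], use x in \<open>simp add: adj_adj\<close>)
qed



lemma U2_Y:
  fixes s :: "'a::cstar_algebra" and c d :: real
  assumes iss: "adj s * s = 1" and cd: "c * c + d * d = 1"
  shows "U2 (mk (scaleR c (s * adj s) + (1 - s * adj s)) (scaleR (- d) s) (scaleR d (adj s)) (scaleR c 1))"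
proof -
  have R: "adj s * (s * x) = x" for x using iss by (simp flip: mult.assoc)
  have cc: "c * c = 1 - d * d" using cd by simp
  show ?thesis unfolding U2_def
    by (rule exI)+ (rule conjI[OF refl],
      simp add: adj_add adj_diff adj_mult adj_adj adj_scaleR algebra_simps R iss cc scaleR_diff_left)
qed

lemma U2_R:
  fixes c d :: real
  assumes cd: "c * c + d * d = 1"
  shows "U2 (mk (scaleR c 1) (scaleR (- d) 1) (scaleR d 1) (scaleR c (1::'a::cstar_algebra)))"
proof -
  have cc: "c * c = 1 - d * d" using cd by simp
  show ?thesis unfolding U2_def
    by (rule exI)+ (rule conjI[OF refl],
      simp add: adj_add adj_diff adj_mult adj_adj adj_scaleR algebra_simps cc scaleR_diff_left)
qed

lemma U2_diag:
  fixes a b :: "'a::cstar_algebra"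
  assumes "unitary a" "unitary b" shows "U2 (mk a 0 0 b)"
  using assms unfolding U2_def unitary_def by (rule_tac exI)+ (rule conjI[OF refl], simp)



definition cont2 :: "real set \<Rightarrow> (real \<Rightarrow> nat \<Rightarrow> nat \<Rightarrow> 'a::cstar_algebra) \<Rightarrow> bool" where
  "cont2 S X \<longleftrightarrow> (\<forall>i k. continuous_on S (\<lambda>t. X t i k))"

lemma cont2_mm: "cont2 S X \<Longrightarrow> cont2 S Y \<Longrightarrow> cont2 S (\<lambda>t. mat_mult n (X t) (Y t))"
  unfolding cont2_def mat_mult_def by (auto intro!: continuous_intros)

lemma cont2_adj: "cont2 S X \<Longrightarrow> cont2 S (\<lambda>t. mat_adj (X t))"
  unfolding cont2_def mat_adj_def by (auto intro!: continuous_intros)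

lemma cont2_mk: "continuous_on S a \<Longrightarrow> continuous_on S b \<Longrightarrow> continuous_on S c \<Longrightarrow> continuous_on S d
   \<Longrightarrow> cont2 S (\<lambda>t. mk (a t) (b t) (c t) (d t))"
  unfolding cont2_def mk_def
proof (intro allI)
  fix i k :: nat
  assume "continuous_on S a" "continuous_on S b" "continuous_on S c" "continuous_on S d"
  then show "continuous_on S (\<lambda>t. if i = 0 then if k = 0 then a t else b t else if k = 0 then c t else d t)"
    by (cases "i = 0"; cases "k = 0") auto
qed

lemma cont2_const: "cont2 S (\<lambda>t. X)"
  unfolding cont2_def by auto

lemma K1_sigma:
  fixes u s :: "'a::cstar_algebra"
  assumes u: "unitary u" and iss: "adj s * s = 1"
  shows "K1_zero ((s * adj u * adj s + (1 - s * adj s)) * u)"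
proof -
  define q where "q = s * adj s"
  define Y where "Y = (\<lambda>\<theta>::real. mk (scaleR (cos \<theta>) q + (1 - q)) (scaleR (- sin \<theta>) s) (scaleR (sin \<theta>) (adj s)) (scaleR (cos \<theta>) (1::'a)))"
  define R where "R = (\<lambda>\<theta>::real. mk (scaleR (cos \<theta>) 1) (scaleR (- sin \<theta>) 1) (scaleR (sin \<theta>) 1) (scaleR (cos \<theta>) (1::'a)))"
  define W where "W = (\<lambda>t. mat_mult 2 (Y ((1 - t) * (pi / 2))) (R (t * (pi / 2))))"
  define D where "D = mk 1 0 0 (adj u)"
  define E where "E = mk u 0 0 1"
  define V where "V = (\<lambda>t. mat_mult 2 (mat_mult 2 (mat_mult 2 (W t) D) (mat_adj (W t))) E)"
  have uu: "adj u * u = 1" "u * adj u = 1" using u by (auto simp: unitary_def)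
  have ua: "unitary (adj u)" using u by (auto simp: unitary_def adj_adj)
  have un1: "unitary (1::'a)" by (simp add: unitary_def)
  have UY: "U2 (Y \<theta>)" for \<theta> unfolding Y_def q_def by (rule U2_Y[OF iss]) (simp add: sin_cos_squared_add3)
  have UR: "U2 (R \<theta>)" for \<theta> unfolding R_def by (rule U2_R) (simp add: sin_cos_squared_add3)
  have UV: "U2 (V t)" for t unfolding V_def W_def D_def E_def
    by (intro U2_mult U2_adj UY UR U2_diag u ua un1)
  have R1: "adj s * (s * x) = x" for x using iss by (simp flip: mult.assoc)
  have V0: "V 0 = mk ((s * adj u * adj s + (1 - s * adj s)) * u) 0 0 1"
    unfolding V_def W_def D_def E_def Y_def R_def q_def
    by (simp add: mult_mk adj_mk adj_add adj_diff adj_mult adj_adj adj_scaleR algebra_simps R1 iss)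
  have V1: "V 1 = mk 1 0 0 1"
    unfolding V_def W_def D_def E_def Y_def R_def q_def
    by (simp add: mult_mk adj_mk adj_add adj_diff adj_mult adj_adj adj_scaleR algebra_simps uu)
  have CY: "cont2 {0..1} (\<lambda>t. Y ((1 - t) * (pi / 2)))" unfolding Y_def
    by (intro cont2_mk continuous_intros)
  have CR: "cont2 {0..1} (\<lambda>t. R (t * (pi / 2)))" unfolding R_def
    by (intro cont2_mk continuous_intros)
  have CV: "cont2 {0..1} V" unfolding V_def W_def
    by (intro cont2_mm cont2_adj CY CR cont2_const)
  show ?thesis unfolding K1_zero_def
  proof (intro exI[of _ 2] conjI exI[of _ V])
    show "\<forall>t\<in>{0..1}. mat_unitary 2 (V t)" using UV U2_mat_unitary by blast
    show "mat_eq 2 (V 0) (diag_u_one ((s * adj u * adj s + (1 - s * adj s)) * u))"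
      unfolding V0 by (auto simp: mat_eq_def mk_def diag_u_one_def less_Suc_eq numeral_2_eq_2)
    show "mat_eq 2 (V 1) mat_id"
      unfolding V1 by (auto simp: mat_eq_def mk_def mat_id_def less_Suc_eq numeral_2_eq_2)
    show "\<forall>i<2. \<forall>k<2. continuous_on {0..1} (\<lambda>t. V t i k)" using CV by (simp add: cont2_def)
  qed simp
qed



definition ohtp :: "(nat \<Rightarrow> 'a::cstar_algebra) \<Rightarrow> (nat \<Rightarrow> 'a) \<Rightarrow> bool" where
  "ohtp S T \<longleftrightarrow> (\<exists>H :: real \<Rightarrow> nat \<Rightarrow> 'a. (\<forall>t\<in>{0..1}. Oinf_hom (H t)) \<and> (\<forall>j. continuous_on {0..1} (\<lambda>t. H t j))
      \<and> H 0 = S \<and> H 1 = T)"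

lemma word_cont:
  assumes "\<forall>j. continuous_on S (\<lambda>t. H t j)"
  shows "continuous_on S (\<lambda>t. Oinf_word (H t) w :: 'a::cstar_algebra)"
proof (induction w)
  case Nil then show ?case by (simp add: Oinf_word_def)
next
  case (Cons x w)
  obtain j b where x: "x = (j, b)" by force
  have c: "continuous_on S (\<lambda>t. (if b then adj (H t j) else H t j))"
    using assms by (cases b) (auto intro!: continuous_intros)
  have "continuous_on S (\<lambda>t. (if b then adj (H t j) else H t j) * Oinf_word (H t) w)"
    by (intro continuous_intros c Cons)
  then show ?case by (simp add: Oinf_word_def x)
qed

lemma ohtp_homotopic: "ohtp S T \<Longrightarrow> Oinf_homotopic S T"
  unfolding ohtp_def Oinf_homotopic_def using word_cont by blast

lemma ohtp_sym: assumes "ohtp S T" shows "ohtp T S"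
proof -
  obtain H :: "real \<Rightarrow> nat \<Rightarrow> _" where H: "\<forall>t\<in>{0..1}. Oinf_hom (H t)" "\<forall>j. continuous_on {0..1} (\<lambda>t. H t j)" "H 0 = S" "H 1 = T"
    using assms unfolding ohtp_def by blast
  have "continuous_on {0..1} (\<lambda>t. H (1 - t) j)" for j
  proof -
    have "continuous_on {0..1::real} (\<lambda>t. 1 - t)" by (intro continuous_intros)
    moreover have "(\<lambda>t. 1 - t) ` {0..1::real} \<subseteq> {0..1}" by auto
    ultimately show ?thesis using continuous_on_compose2[OF H(2)[rule_format, of j]] by blast
  qed
  moreover have "\<forall>t\<in>{0..1}. Oinf_hom (H (1 - t))" using H(1) by auto
  ultimately show ?thesis unfolding ohtp_def using H(3,4) by (intro exI[of _ "\<lambda>t. H (1 - t)"]) auto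
qed

lemma ohtp_trans: assumes "ohtp S T" "ohtp T U" shows "ohtp S U"
proof -
  obtain H :: "real \<Rightarrow> nat \<Rightarrow> _" where H: "\<forall>t\<in>{0..1}. Oinf_hom (H t)" "\<forall>j. continuous_on {0..1} (\<lambda>t. H t j)" "H 0 = S" "H 1 = T"
    using assms(1) unfolding ohtp_def by blast
  obtain K :: "real \<Rightarrow> nat \<Rightarrow> _" where K: "\<forall>t\<in>{0..1}. Oinf_hom (K t)" "\<forall>j. continuous_on {0..1} (\<lambda>t. K t j)" "K 0 = T" "K 1 = U"
    using assms(2) unfolding ohtp_def by blast
  define G where "G = (\<lambda>t j. if t \<le> 1/2 then H (2 * t) j else K (2 * t - 1) j)"
  have G': "G t = (if t \<le> 1/2 then H (2 * t) else K (2 * t - 1))" for t by (auto simp: G_def)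
  have "continuous_on {0..1} (\<lambda>t. G t j)" for j
  proof -
    have c1: "continuous_on {0..1/2} (\<lambda>t. H (2 * t) j)"
    proof -
      have "continuous_on {0..1/2::real} (\<lambda>t. 2 * t)" by (intro continuous_intros)
      moreover have "(\<lambda>t. 2 * t) ` {0..1/2::real} \<subseteq> {0..1}" by auto
      ultimately show ?thesis using continuous_on_compose2[OF H(2)[rule_format, of j]] by blast
    qed
    have c2: "continuous_on {1/2..1} (\<lambda>t. K (2 * t - 1) j)"
    proof -
      have "continuous_on {1/2..1::real} (\<lambda>t. 2 * t - 1)" by (intro continuous_intros)
      moreover have "(\<lambda>t. 2 * t - 1) ` {1/2..1::real} \<subseteq> {0..1}" by auto
      ultimately show ?thesis using continuous_on_compose2[OF K(2)[rule_format, of j]] by blast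
    qed
    have "continuous_on ({0..1/2} \<union> {1/2..1}) (\<lambda>t. if t \<le> 1/2 then H (2 * t) j else K (2 * t - 1) j)"
      proof (rule continuous_on_cases[OF _ _ c1 c2])
      show "\<forall>t. t \<in> {0..1/2} \<and> \<not> t \<le> 1/2 \<or> t \<in> {1/2..1} \<and> t \<le> 1/2 \<longrightarrow> H (2 * t) j = K (2 * t - 1) j"
      proof (intro allI impI)
        fix t :: real assume "t \<in> {0..1/2} \<and> \<not> t \<le> 1/2 \<or> t \<in> {1/2..1} \<and> t \<le> 1/2"
        then have "2 * t = 1" by auto
        then show "H (2 * t) j = K (2 * t - 1) j" using H(4) K(3) by simp
      qed
    qed auto
    moreover have "{0..1/2} \<union> {1/2..1} = {0..1::real}" by auto
    ultimately show ?thesis unfolding G_def by simp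
  qed
  moreover have "\<forall>t\<in>{0..1}. Oinf_hom (G t)" using H(1) K(1) unfolding G' by auto
  moreover have "G 0 = S" "G 1 = U" using H K unfolding G' by auto
  ultimately show ?thesis unfolding ohtp_def by blast
qed

lemma Oinf_hom_iff: "Oinf_hom V \<longleftrightarrow> (\<forall>j. adj (V j) * V j = 1) \<and> (\<forall>i j. i \<noteq> j \<longrightarrow> adj (V i) * V j = 0)"
proof
  assume h: "Oinf_hom V"
  have "adj (V i) * V j = 0" if "i \<noteq> j" for i j
  proof -
    have "adj (V i) * (V i * adj (V i) * (V j * adj (V j))) * V j = 0" using h that by (simp add: Oinf_hom_def)
    then show ?thesis using h by (simp add: Oinf_hom_def isometry_def mult.assoc) (metis mult.assoc mult_1_left mult_1_right)
  qed
  then show "(\<forall>j. adj (V j) * V j = 1) \<and> (\<forall>i j. i \<noteq> j \<longrightarrow> adj (V i) * V j = 0)"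
    using h by (auto simp: Oinf_hom_def isometry_def)
next
  assume h: "(\<forall>j. adj (V j) * V j = 1) \<and> (\<forall>i j. i \<noteq> j \<longrightarrow> adj (V i) * V j = 0)"
  have "V i * adj (V i) * (V j * adj (V j)) = V i * (adj (V i) * V j) * adj (V j)" for i j
    by (simp add: mult.assoc)
  then show "Oinf_hom V" using h by (auto simp: Oinf_hom_def isometry_def)
qed

lemma hom_mult:
  assumes "adj u * u = 1" "Oinf_hom S" shows "Oinf_hom (\<lambda>j. u * S j)"
proof -
  have "adj (u * x) * (u * y) = adj x * y" for x y
    using assms(1) by (simp add: adj_mult mult.assoc) (metis mult.assoc mult_1_left)
  then show ?thesis using assms(2) by (simp add: Oinf_hom_iff)
qed

lemma ohtp_mult:
  assumes "adj u * u = 1" "ohtp S T" shows "ohtp (\<lambda>j. u * S j) (\<lambda>j. u * T j)"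
proof -
  obtain H :: "real \<Rightarrow> nat \<Rightarrow> _" where H: "\<forall>t\<in>{0..1}. Oinf_hom (H t)" "\<forall>j. continuous_on {0..1} (\<lambda>t. H t j)" "H 0 = S" "H 1 = T"
    using assms(2) unfolding ohtp_def by blast
  show ?thesis unfolding ohtp_def
    by (rule exI[of _ "\<lambda>t j. u * H t j"]) (use H hom_mult[OF assms(1)] in \<open>auto intro!: continuous_intros\<close>)
qed



lemma iso_comb:
  fixes A B :: "'a::cstar_algebra"
  assumes "adj A * A = 1" "adj B * B = 1" "adj A * B = 0" "c * c + s * s = 1"
  shows "adj (scaleR c A + scaleR s B) * (scaleR c A + scaleR s B) = 1"
proof -
  have "adj B * A = 0" using arg_cong[OF assms(3), of adj] by (simp add: adj_mult adj_adj)
  then have X: "adj (scaleR c A + scaleR s B) * (scaleR c A + scaleR s B) = scaleR (c * c) 1 + scaleR (s * s) 1"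
    using assms by (simp add: adj_add adj_scaleR algebra_simps)
  show ?thesis by (simp only: X flip: scaleR_add_left) (simp add: assms(4))
qed

lemma ohtp_rot:
  fixes H K :: "nat \<Rightarrow> 'a::cstar_algebra"
  assumes h: "Oinf_hom H" and k: "Oinf_hom K" and o: "\<forall>i j. adj (H i) * K j = 0"
  shows "ohtp H K"
proof -
  define P where "P = (\<lambda>t j. scaleR (cos (t * pi / 2)) (H j) + scaleR (sin (t * pi / 2)) (K j))"
  have o': "adj (K i) * H j = 0" for i j using arg_cong[OF o[rule_format, of j i], of adj] by (simp add: adj_mult adj_adj)
  have hi: "\<forall>j. adj (H j) * H j = 1" "\<forall>i j. i \<noteq> j \<longrightarrow> adj (H i) * H j = 0" using h by (auto simp: Oinf_hom_iff)
  have ki: "\<forall>j. adj (K j) * K j = 1" "\<forall>i j. i \<noteq> j \<longrightarrow> adj (K i) * K j = 0" using k by (auto simp: Oinf_hom_iff)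
  have "Oinf_hom (P t)" for t
    unfolding Oinf_hom_iff
  proof (intro conjI allI impI)
    fix j show "adj (P t j) * P t j = 1" unfolding P_def
      by (rule iso_comb) (use hi ki o in \<open>auto simp: sin_cos_squared_add3\<close>)
  next
    fix i j :: nat assume "i \<noteq> j"
    then show "adj (P t i) * P t j = 0" unfolding P_def
      using hi ki o o' by (simp add: adj_add adj_scaleR algebra_simps)
  qed
  moreover have "P 0 = H" "P 1 = K" unfolding P_def by (auto simp: fun_eq_iff)
  moreover have "continuous_on {0..1} (\<lambda>t. P t j)" for j unfolding P_def by (intro continuous_intros) auto
  ultimately show ?thesis unfolding ohtp_def by blast
qed

definition lam :: "nat \<Rightarrow> real \<Rightarrow> real" where
  "lam j t = max 0 (min 1 ((real j + 1) * (real j + 2) * t - (real j + 1)))"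

lemma lam_key: "lam i t = 0 \<or> lam (Suc i) t = 1"
proof (cases "lam i t = 0")
  case False
  then have "(real i + 1) * (real i + 2) * t - (real i + 1) > 0" unfolding lam_def by linarith
  then have "(real i + 1) * ((real i + 2) * t - 1) > 0" by (simp add: algebra_simps)
  then have a: "(real i + 2) * t > 1" by (simp add: zero_less_mult_iff)
  then have t: "t > 0" by (smt (verit, best) mult_nonneg_nonpos of_nat_0_le_iff)
  have "(real i + 3) * t - 1 \<ge> t" using a by (simp add: algebra_simps)
  then have "(real i + 2) * ((real i + 3) * t - 1) \<ge> (real i + 2) * t" by (rule mult_left_mono) simp
  then have "(real (Suc i) + 1) * (real (Suc i) + 2) * t - (real (Suc i) + 1) \<ge> 1"
    using a by (simp add: algebra_simps)
  then show ?thesis unfolding lam_def by simp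
qed simp

lemma lam0: "lam j 0 = 0" unfolding lam_def by simp
lemma lam1: "lam j 1 = 1"
proof -
  have "(real j + 1) * (real j + 2) * 1 - (real j + 1) \<ge> 1"
    by (simp add: algebra_simps)
  then show ?thesis unfolding lam_def by simp
qed

lemma ohtp_shift:
  fixes S :: "nat \<Rightarrow> 'a::cstar_algebra"
  assumes h: "Oinf_hom S"
  shows "ohtp S (\<lambda>j. S (Suc j))"
proof -
  define P where "P = (\<lambda>t j. scaleR (cos (pi / 2 * lam j t)) (S j) + scaleR (sin (pi / 2 * lam j t)) (S (Suc j)))"
  have hi: "\<And>j. adj (S j) * S j = 1" "\<And>i j. i \<noteq> j \<Longrightarrow> adj (S i) * S j = 0" using h by (auto simp: Oinf_hom_iff)
  have lt: "adj (P t i) * P t j = 0" if "i < j" for t i j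
  proof (cases "j = Suc i")
    case True
    have "sin (pi / 2 * lam i t) * cos (pi / 2 * lam (Suc i) t) = 0"
      using lam_key[of i t] by auto
    then show ?thesis unfolding P_def True
      using hi by (simp add: adj_add adj_scaleR algebra_simps flip: scaleR_scaleR) blast
  next
    case False
    then show ?thesis unfolding P_def using that hi by (simp add: adj_add adj_scaleR algebra_simps)
  qed
  have "Oinf_hom (P t)" for t
    unfolding Oinf_hom_iff
  proof (intro conjI allI impI)
    fix j show "adj (P t j) * P t j = 1" unfolding P_def
      by (rule iso_comb) (use hi in \<open>auto simp: sin_cos_squared_add3\<close>)
  next
    fix i j :: nat assume "i \<noteq> j"
    then consider "i < j" | "j < i" by linarith
    then show "adj (P t i) * P t j = 0"
    proof cases
      case 1 then show ?thesis by (rule lt)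
    next
      case 2 then show ?thesis using arg_cong[OF lt[OF 2, of t], of adj] by (simp add: adj_mult adj_adj)
    qed
  qed
  moreover have "P 0 = S" "P 1 = (\<lambda>j. S (Suc j))" unfolding P_def by (auto simp: fun_eq_iff lam0 lam1)
  moreover have "continuous_on {0..1} (\<lambda>t. P t j)" for j unfolding P_def lam_def by (intro continuous_intros)
  ultimately show ?thesis unfolding ohtp_def by blast
qed



lemma shift_hom: "Oinf_hom S \<Longrightarrow> Oinf_hom (\<lambda>j. S (Suc j))"
  by (simp add: Oinf_hom_iff)

lemma ohtp_prefix:
  fixes S X :: "nat \<Rightarrow> 'a::cstar_algebra"
  assumes "Oinf_hom S" "Oinf_hom X"
  shows "ohtp S (\<lambda>j. S 0 * X j)"
proof -
  have hi: "\<And>j. adj (S j) * S j = 1" "\<And>i j. i \<noteq> j \<Longrightarrow> adj (S i) * S j = 0"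
    using assms(1) by (auto simp: Oinf_hom_iff)
  have "ohtp (\<lambda>j. S (Suc j)) (\<lambda>j. S 0 * X j)"
  proof (rule ohtp_rot)
    show "Oinf_hom (\<lambda>j. S (Suc j))" by (rule shift_hom[OF assms(1)])
    show "Oinf_hom (\<lambda>j. S 0 * X j)" by (rule hom_mult[OF hi(1) assms(2)])
    show "\<forall>i j. adj (S (Suc i)) * (S 0 * X j) = 0" using hi(2) by (simp flip: mult.assoc)
  qed
  then show ?thesis using ohtp_shift[OF assms(1)] ohtp_trans by blast
qed

theorem lemma5p3:
  fixes \<phi> \<psi> :: "nat \<Rightarrow> 'a::cstar_algebra"
  assumes "properly_infinite TYPE('a)"
    and "Oinf_hom \<phi>"
    and "Oinf_hom \<psi>"
  shows "\<exists>\<psi>' u. Oinf_hom \<psi>' \<and> Oinf_homotopic \<psi> \<psi>' \<and>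
           unitary u \<and> K1_zero u \<and> (\<forall>j. \<psi>' j = u * \<phi> j)"
proof -
  define t0 where "t0 = \<phi> 0"
  define t1 where "t1 = \<phi> 1"
  define s0 where "s0 = \<psi> 0"
  define s1 where "s1 = \<psi> 1"
  have ph: "\<And>j. adj (\<phi> j) * \<phi> j = 1" "\<And>i j. i \<noteq> j \<Longrightarrow> adj (\<phi> i) * \<phi> j = 0"
    using assms(2) by (auto simp: Oinf_hom_iff)
  have ps: "\<And>j. adj (\<psi> j) * \<psi> j = 1" "\<And>i j. i \<noteq> j \<Longrightarrow> adj (\<psi> i) * \<psi> j = 0"
    using assms(3) by (auto simp: Oinf_hom_iff)
  have it0: "adj t0 * t0 = 1" and it1: "adj t1 * t1 = 1" and ot: "adj t0 * t1 = 0"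
    and is0: "adj s0 * s0 = 1" and is1: "adj s1 * s1 = 1" and os: "adj s0 * s1 = 0" and os': "adj s1 * s0 = 0"
    unfolding t0_def t1_def s0_def s1_def using ph ps by auto
  obtain v where v: "pisom v (1 - t0 * adj t0) (1 - s0 * adj s0)"
    using v_exists[OF it0 it1 ot is0 is1 os] by blast
  have R: "adj t0 * (t0 * x) = x" "adj s0 * (s0 * x) = x" "adj s1 * (s1 * x) = x" "adj s1 * (s0 * x) = 0"
    for x using it0 is0 is1 os' by (simp_all flip: mult.assoc)
  have w: "pisom (s0 * adj t0) (t0 * adj t0) (s0 * adj s0)"
    unfolding pisom_def by (simp add: adj_mult adj_adj R mult.assoc)
  have e2: "(1 - t0 * adj t0) * (1 - t0 * adj t0) = 1 - t0 * adj t0"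
    by (simp add: algebra_simps R)
  have "pisom (s0 * adj t0 + v) (t0 * adj t0 + (1 - t0 * adj t0)) (s0 * adj s0 + (1 - s0 * adj s0))"
    by (rule pisom_add[OF w v]) (simp_all add: algebra_simps R)
  then have uu: "adj (s0 * adj t0 + v) * (s0 * adj t0 + v) = 1" "(s0 * adj t0 + v) * adj (s0 * adj t0 + v) = 1"
    by (auto simp: pisom_def)
  define u where "u = s0 * adj t0 + v"
  have vt: "v * t0 = 0"
  proof -
    have "v * t0 = v * (1 - t0 * adj t0) * t0" using pisom_right[OF v e2] by simp
    also have "... = 0" by (simp add: algebra_simps R mult.assoc it0)
    finally show ?thesis .
  qed
  have ut: "u * t0 = s0" unfolding u_def by (simp add: algebra_simps vt mult.assoc it0)
  have uu': "adj u * u = 1" "u * adj u = 1" using uu by (auto simp: u_def)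
  define \<sigma> where "\<sigma> = s1 * adj u * adj s1 + (1 - s1 * adj s1)"
  define u' where "u' = \<sigma> * u"
  have R2: "adj s1 * (s1 * x) = x" "adj u * (u * x) = x" "u * (adj u * x) = x" for x
    using is1 uu' by (simp_all flip: mult.assoc)
  have sig: "adj \<sigma> * \<sigma> = 1" "\<sigma> * adj \<sigma> = 1"
    unfolding \<sigma>_def by (simp_all add: adj_add adj_diff adj_mult adj_adj algebra_simps R2 is1)
  have uni: "unitary u'" unfolding unitary_def u'_def
  proof
    show "adj (\<sigma> * u) * (\<sigma> * u) = 1"
      using sig uu' by (simp add: adj_mult mult.assoc) (metis mult.assoc mult_1_left)
    show "\<sigma> * u * adj (\<sigma> * u) = 1"
      using sig uu' by (simp add: adj_mult mult.assoc) (metis mult.assoc mult_1_left)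
  qed
  have k1: "K1_zero u'" unfolding u'_def \<sigma>_def
    by (rule K1_sigma) (use uu' is1 in \<open>auto simp: unitary_def\<close>)
  have u't: "u' * t0 = s0"
    unfolding u'_def \<sigma>_def by (simp add: mult.assoc ut algebra_simps R os')
  have iu': "adj u' * u' = 1" using uni by (simp add: unitary_def)
  have h1: "ohtp \<psi> (\<lambda>j. s0 * \<phi> j)" unfolding s0_def by (rule ohtp_prefix[OF assms(3,2)])
  have h2: "ohtp \<phi> (\<lambda>j. t0 * \<phi> j)" unfolding t0_def by (rule ohtp_prefix[OF assms(2,2)])
  have h3: "ohtp (\<lambda>j. u' * \<phi> j) (\<lambda>j. u' * (t0 * \<phi> j))" by (rule ohtp_mult[OF iu' h2])
  have "(\<lambda>j. u' * (t0 * \<phi> j)) = (\<lambda>j. s0 * \<phi> j)" using u't by (simp add: mult.assoc[symmetric])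
  then have "ohtp \<psi> (\<lambda>j. u' * \<phi> j)" using h1 h3 ohtp_sym ohtp_trans by metis
  then show ?thesis
    using hom_mult[OF iu' assms(2)] ohtp_homotopic uni k1 by blast
qed

end
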